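(* Let $r \ge 2$ be an integer. For every integer $k \ge 2$ there exist constants $c > 0$ and $d > 0$ such that for every function $m = m(n)$ with $cn \le m \le d n^{2 - 2/(r+2)}$, \[ \frac{|\mathcal{F}_{n,m}(K_{r+1})|}{|\mathcal{G}_{n,m}(k)|} \to \infty \quad \text{as } n \to \infty. \]
   Context: $\mathcal{F}_{n,m}(K_{r+1})$ is the family of all $K_{r+1}$-free graphs on vertex set $[n]$ with exactly $m$ edges; $\mathcal{G}_{n,m}(k)$ is the family of all $k$-colorable graphs on vertex set $[n]$ with exactly $m$ edges. *)

theory Defs
  imports Complex_Main
begin

definition graphs_on :: "nat \<Rightarrow> nat set set set" where
  "graphs_on n = {E. \<forall>e\<in>E. e \<subseteq> {1..n} \<and> card e = 2}"

definition has_clique :: "nat set set \<Rightarrow> nat \<Rightarrow> bool" where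
  "has_clique E s = (\<exists>S. finite S \<and> card S = s \<and> (\<forall>x\<in>S. \<forall>y\<in>S. x \<noteq> y \<longrightarrow> {x, y} \<in> E))"

definition colorable :: "nat \<Rightarrow> nat set set \<Rightarrow> nat \<Rightarrow> bool" where
  "colorable n E k = (\<exists>f. (\<forall>v\<in>{1..n}. f v < k) \<and> (\<forall>x y. {x, y} \<in> E \<longrightarrow> f x \<noteq> (f y :: nat)))"

definition Kfree_family :: "nat \<Rightarrow> nat \<Rightarrow> nat \<Rightarrow> nat set set set" where
  "Kfree_family n m r = {E \<in> graphs_on n. card E = m \<and> \<not> has_clique E (r + 1)}"

definition colorable_family :: "nat \<Rightarrow> nat \<Rightarrow> nat \<Rightarrow> nat set set set" where
  "colorable_family n m k = {E \<in> graphs_on n. card E = m \<and> colorable n E k}"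

end

theory Submission
  imports Defs
begin


lemma count_supersets:
  assumes fin: "finite P" and AP: "A \<subseteq> P" and aj: "card A \<le> j"
  shows "card {H. H \<subseteq> P \<and> card H = j \<and> A \<subseteq> H} = (card P - card A) choose (j - card A)"
proof -
  have finA: "finite A" using fin AP finite_subset by blast
  have "bij_betw (\<lambda>H. H - A) {H. H \<subseteq> P \<and> card H = j \<and> A \<subseteq> H} {G. G \<subseteq> P - A \<and> card G = j - card A}"
  proof (rule bij_betw_byWitness[where f'="\<lambda>G. G \<union> A"])
    show "\<forall>a\<in>{H. H \<subseteq> P \<and> card H = j \<and> A \<subseteq> H}. a - A \<union> A = a" by auto
    show "\<forall>a'\<in>{G. G \<subseteq> P - A \<and> card G = j - card A}. a' \<union> A - A = a'" by auto
    show "(\<lambda>H. H - A) ` {H. H \<subseteq> P \<and> card H = j \<and> A \<subseteq> H} \<subseteq> {G. G \<subseteq> P - A \<and> card G = j - card A}"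
      using fin by (auto simp: card_Diff_subset finA intro: finite_subset)
    show "(\<lambda>G. G \<union> A) ` {G. G \<subseteq> P - A \<and> card G = j - card A} \<subseteq> {H. H \<subseteq> P \<and> card H = j \<and> A \<subseteq> H}"
    proof clarsimp
      fix G assume "G \<subseteq> P - A" "card G = j - card A"
      moreover have "finite G" using \<open>G \<subseteq> P - A\<close> fin finite_subset by blast
      moreover have "G \<inter> A = {}" using \<open>G \<subseteq> P - A\<close> by blast
      ultimately show "G \<subseteq> P \<and> A \<subseteq> P \<and> card (G \<union> A) = j"
        using AP aj finA by (auto simp add: card_Un_disjoint)
    qed
  qed
  then have "card {H. H \<subseteq> P \<and> card H = j \<and> A \<subseteq> H} = card {G. G \<subseteq> P - A \<and> card G = j - card A}"
    by (rule bij_betw_same_card)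
  also have "\<dots> = card (P - A) choose (j - card A)" using fin by (simp add: n_subsets)
  also have "card (P - A) = card P - card A" using AP finA by (simp add: card_Diff_subset)
  finally show ?thesis .
qed

lemma count_supersets_small:
  assumes fin: "finite P" and "card A > j"
  shows "card {H. H \<subseteq> P \<and> card H = j \<and> A \<subseteq> H} = 0"
proof -
  have "{H. H \<subseteq> P \<and> card H = j \<and> A \<subseteq> H} = {}"
  proof (safe)
    fix H assume "H \<subseteq> P" "A \<subseteq> H" "j = card H"
    then have "card A \<le> card H" using fin by (meson card_mono finite_subset)
    then show "H \<in> {}" using assms \<open>j = card H\<close> by simp
  qed
  then show ?thesis by (metis card.empty)
qed

lemma deletion:
  fixes P :: "'a set" and Ks :: "'a set set"
  assumes fin: "finite P" and Ks: "\<And>K. K \<in> Ks \<Longrightarrow> K \<subseteq> P \<and> card K = s"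
    and s1: "s \<ge> 1" and sm: "s \<le> m + L" and mL: "m + L \<le> card P"
    and markov: "2 * card Ks * ((card P - s) choose (m + L - s)) \<le> (L + 1) * (card P choose (m + L))"
  shows "card P choose (m + L) \<le> 2 * card {F. F \<subseteq> P \<and> card F = m \<and> (\<forall>K\<in>Ks. \<not> K \<subseteq> F)} * ((card P - m) choose L)"
proof -
  define Gr where "Gr = {H. H \<subseteq> P \<and> card H = m + L}"
  define bad where "bad = (\<lambda>H. {K\<in>Ks. K \<subseteq> H})"
  define Free where "Free = {F. F \<subseteq> P \<and> card F = m \<and> (\<forall>K\<in>Ks. \<not> K \<subseteq> F)}"
  define Bad where "Bad = {H\<in>Gr. L < card (bad H)}"
  have finKs: "finite Ks"
  proof -
    have "Ks \<subseteq> Pow P" using Ks by auto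
    then show ?thesis using fin finite_subset by blast
  qed
  have finGr: "finite Gr" unfolding Gr_def using fin by auto
  have cardGr: "card Gr = card P choose (m + L)" unfolding Gr_def using fin by (simp add: n_subsets)
  have sumeq: "(\<Sum>H\<in>Gr. card (bad H)) = (\<Sum>K\<in>Ks. card {H\<in>Gr. K \<subseteq> H})"
  proof -
    have "(\<Sum>H\<in>Gr. card (bad H)) = (\<Sum>H\<in>Gr. \<Sum>K\<in>Ks. if K \<subseteq> H then 1 else 0)"
      unfolding bad_def using finKs by (simp add: sum.If_cases Int_def)
    also have "\<dots> = (\<Sum>K\<in>Ks. \<Sum>H\<in>Gr. if K \<subseteq> H then 1 else 0)" by (rule sum.swap)
    also have "\<dots> = (\<Sum>K\<in>Ks. card {H\<in>Gr. K \<subseteq> H})"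
      using finGr by (simp add: sum.If_cases Int_def)
    finally show ?thesis .
  qed
  have each: "card {H\<in>Gr. K \<subseteq> H} = (card P - s) choose (m + L - s)" if "K \<in> Ks" for K
  proof -
    have "{H\<in>Gr. K \<subseteq> H} = {H. H \<subseteq> P \<and> card H = m + L \<and> K \<subseteq> H}" unfolding Gr_def by auto
    then show ?thesis using count_supersets[OF fin, of K "m + L"] Ks[OF that] sm by simp
  qed
  have "(L + 1) * card Bad \<le> (\<Sum>H\<in>Bad. card (bad H))"
  proof -
    have "(L + 1) * card Bad = (\<Sum>H\<in>Bad. L + 1)" by simp
    also have "\<dots> \<le> (\<Sum>H\<in>Bad. card (bad H))" by (rule sum_mono) (auto simp: Bad_def)
    finally show ?thesis .
  qed
  also have "\<dots> \<le> (\<Sum>H\<in>Gr. card (bad H))"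
    by (rule sum_mono2[OF finGr]) (auto simp: Bad_def)
  also have "\<dots> = card Ks * ((card P - s) choose (m + L - s))"
    using sumeq each by simp
  finally have "2 * ((L + 1) * card Bad) \<le> 2 * (card Ks * ((card P - s) choose (m + L - s)))"
    by simp
  also have "\<dots> \<le> (L + 1) * card Gr" using markov cardGr by simp
  finally have "(L + 1) * (2 * card Bad) \<le> (L + 1) * card Gr" by (simp add: ac_simps)
  then have Badb: "2 * card Bad \<le> card Gr" using mult_le_cancel1[of "L+1" "2 * card Bad" "card Gr"] by simp
  have good: "\<exists>F\<in>Free. F \<subseteq> H" if "H \<in> Gr - Bad" for H
  proof -
    define D where "D = (\<lambda>K. SOME e. e \<in> K) ` bad H"
    have HP: "H \<subseteq> P" "card H = m + L" using that by (auto simp: Gr_def)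
    have finH: "finite H" using HP fin finite_subset by blast
    have cb: "card (bad H) \<le> L" using that by (auto simp: Bad_def)
    have finbad: "finite (bad H)" unfolding bad_def using finKs by simp
    have Kne: "K \<noteq> {}" if "K \<in> Ks" for K using Ks[OF that] s1 by auto
    have chosen: "(SOME e. e \<in> K) \<in> K" if "K \<in> Ks" for K
      using Kne[OF that] by (simp add: some_in_eq)
    have DH: "D \<subseteq> H" unfolding D_def bad_def using chosen by blast
    have cD: "card D \<le> L" unfolding D_def using card_image_le[OF finbad] cb by (meson order.trans)
    have finD: "finite D" using DH finH finite_subset by blast
    have "card (H - D) = card H - card D" using DH finD by (simp add: card_Diff_subset)
    then have "m \<le> card (H - D)" using cD HP by simp
    then obtain F where F: "F \<subseteq> H - D" "card F = m" by (meson obtain_subset_with_card_n)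
    have "\<forall>K\<in>Ks. \<not> K \<subseteq> F"
    proof (intro ballI notI)
      fix K assume K: "K \<in> Ks" "K \<subseteq> F"
      then have "K \<in> bad H" using F unfolding bad_def by auto
      then have "(SOME e. e \<in> K) \<in> D" unfolding D_def by blast
      moreover have "(SOME e. e \<in> K) \<in> F" using chosen[OF K(1)] K(2) by blast
      ultimately show False using F by blast
    qed
    then have "F \<in> Free" using F HP unfolding Free_def by auto
    then show ?thesis using F by blast
  qed
  have finFree: "finite Free" unfolding Free_def using fin by auto
  have "Gr - Bad \<subseteq> (\<Union>F\<in>Free. {H\<in>Gr. F \<subseteq> H})" using good by blast
  then have "card (Gr - Bad) \<le> card (\<Union>F\<in>Free. {H\<in>Gr. F \<subseteq> H})"
    by (intro card_mono) (use finGr finFree in auto)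
  also have "\<dots> \<le> (\<Sum>F\<in>Free. card {H\<in>Gr. F \<subseteq> H})" by (rule card_UN_le[OF finFree])
  also have "\<dots> = (\<Sum>F\<in>Free. (card P - m) choose L)"
  proof (rule sum.cong[OF refl])
    fix F assume "F \<in> Free"
    then have F: "F \<subseteq> P" "card F = m" unfolding Free_def by auto
    have "{H\<in>Gr. F \<subseteq> H} = {H. H \<subseteq> P \<and> card H = m + L \<and> F \<subseteq> H}" unfolding Gr_def by auto
    then show "card {H\<in>Gr. F \<subseteq> H} = (card P - m) choose L"
      using count_supersets[OF fin F(1), of "m + L"] F by simp
  qed
  also have "\<dots> = card Free * ((card P - m) choose L)" by simp
  finally have "card (Gr - Bad) \<le> card Free * ((card P - m) choose L)" .
  moreover have "card Gr \<le> card (Gr - Bad) + card Bad"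
  proof -
    have "Bad \<subseteq> Gr" unfolding Bad_def by auto
    then have "card (Gr - Bad) = card Gr - card Bad" using finGr finite_subset card_Diff_subset by metis
    moreover have "card Bad \<le> card Gr" using \<open>Bad \<subseteq> Gr\<close> finGr card_mono by blast
    ultimately show ?thesis by simp
  qed
  ultimately show ?thesis using Badb cardGr unfolding Free_def by linarith
qed




definition Pn :: "nat \<Rightarrow> nat set set" where "Pn n = {e. e \<subseteq> {1..n} \<and> card e = 2}"
definition KS :: "nat set \<Rightarrow> nat set set" where "KS S = {e. e \<subseteq> S \<and> card e = 2}"

lemma finite_Pn: "finite (Pn n)" unfolding Pn_def by auto
lemma card_Pn: "card (Pn n) = n choose 2"
  unfolding Pn_def using n_subsets[of "{1..n}" 2] by simp

lemma graphs_on_Pn: "E \<in> graphs_on n \<longleftrightarrow> E \<subseteq> Pn n"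
  unfolding graphs_on_def Pn_def by auto

lemma clique_KS:
  assumes E: "E \<subseteq> Pn n" and hc: "has_clique E (r + 1)" and r: "r \<ge> 1"
  shows "\<exists>S. S \<subseteq> {1..n} \<and> card S = r + 1 \<and> KS S \<subseteq> E"
proof -
  obtain S where S: "finite S" "card S = r + 1" "\<And>x y. x \<in> S \<Longrightarrow> y \<in> S \<Longrightarrow> x \<noteq> y \<Longrightarrow> {x, y} \<in> E"
    using hc unfolding has_clique_def by blast
  have "S \<subseteq> {1..n}"
  proof
    fix x assume x: "x \<in> S"
    have "card (S - {x}) \<ge> 1" using S x r by (simp add: card_Diff_singleton)
    then obtain y where "y \<in> S - {x}" by (metis all_not_in_conv card.empty not_one_le_zero)
    then have "{x, y} \<in> E" using S x by auto
    then have "{x, y} \<subseteq> {1..n}" using E unfolding Pn_def by auto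
    then show "x \<in> {1..n}" by auto
  qed
  moreover have "KS S \<subseteq> E"
  proof
    fix e assume "e \<in> KS S"
    then have "e \<subseteq> S" "card e = 2" unfolding KS_def by auto
    then obtain x y where "e = {x, y}" "x \<noteq> y" using card_2_iff[of e] by blast
    then show "e \<in> E" using S \<open>e \<subseteq> S\<close> by auto
  qed
  ultimately show ?thesis using S by blast
qed

lemma lowerF:
  assumes r: "r \<ge> 1" and sdef: "s = (r + 1) choose 2" and sm: "s \<le> m + L"
    and mL: "m + L \<le> n choose 2"
    and markov: "2 * (n choose (r + 1)) * (((n choose 2) - s) choose (m + L - s)) \<le> (L + 1) * ((n choose 2) choose (m + L))"
  shows "(n choose 2) choose (m + L) \<le> 2 * card (Kfree_family n m r) * (((n choose 2) - m) choose L)"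
proof -
  define Ks where "Ks = KS ` {S. S \<subseteq> {1..n} \<and> card S = r + 1}"
  have cKs: "card Ks \<le> n choose (r + 1)"
  proof -
    have "card Ks \<le> card {S. S \<subseteq> {1..n} \<and> card S = r + 1}" unfolding Ks_def by (rule card_image_le) (rule finite_subset[of _ "Pow {1..n}"], auto)
    also have "\<dots> = n choose (r + 1)" using n_subsets[of "{1..n}" "r+1"] by simp
    finally show ?thesis .
  qed
  have Ks: "K \<subseteq> Pn n \<and> card K = s" if KK: "K \<in> Ks" for K
  proof -
    obtain S where S: "S \<subseteq> {1..n}" "card S = r + 1" "K = KS S" using KK unfolding Ks_def by blast
    have "finite S" using S(1) finite_subset by blast
    then have "card K = s" using S n_subsets[of S 2] sdef unfolding KS_def by simp
    moreover have "K \<subseteq> Pn n" using S unfolding KS_def Pn_def by auto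
    ultimately show ?thesis by simp
  qed
  have s1: "s \<ge> 1" using sdef r zero_less_binomial[of 2 "r+1"] by linarith
  have mk: "2 * card Ks * ((card (Pn n) - s) choose (m + L - s)) \<le> (L + 1) * (card (Pn n) choose (m + L))"
  proof -
    have "2 * card Ks * ((card (Pn n) - s) choose (m + L - s)) \<le> 2 * (n choose (r + 1)) * ((card (Pn n) - s) choose (m + L - s))"
      using cKs by (intro mult_le_mono1) simp
    then show ?thesis using markov unfolding card_Pn by linarith
  qed
  have mL': "m + L \<le> card (Pn n)" using mL card_Pn by simp
  have D: "card (Pn n) choose (m + L) \<le> 2 * card {F. F \<subseteq> Pn n \<and> card F = m \<and> (\<forall>K\<in>Ks. \<not> K \<subseteq> F)} * ((card (Pn n) - m) choose L)"
    by (rule deletion[OF finite_Pn Ks s1 sm mL' mk])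
  have sub: "{F. F \<subseteq> Pn n \<and> card F = m \<and> (\<forall>K\<in>Ks. \<not> K \<subseteq> F)} \<subseteq> Kfree_family n m r"
  proof (rule subsetI)
    fix F assume "F \<in> {F. F \<subseteq> Pn n \<and> card F = m \<and> (\<forall>K\<in>Ks. \<not> K \<subseteq> F)}"
    then have F: "F \<subseteq> Pn n" "\<forall>K\<in>Ks. \<not> K \<subseteq> F" "m = card F" by auto
    have "\<not> has_clique F (r + 1)"
    proof
      assume "has_clique F (r + 1)"
      then obtain S where "S \<subseteq> {1..n}" "card S = r + 1" "KS S \<subseteq> F" using clique_KS[OF F(1) _ r] by blast
      then show False using F(2) unfolding Ks_def by blast
    qed
    then show "F \<in> Kfree_family n m r" using F unfolding Kfree_family_def graphs_on_Pn by auto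
  qed
  have finK: "finite (Kfree_family n m r)"
  proof -
    have "Kfree_family n m r \<subseteq> Pow (Pn n)" unfolding Kfree_family_def graphs_on_Pn by auto
    then show ?thesis using finite_Pn finite_subset by blast
  qed
  have "card {F. F \<subseteq> Pn n \<and> card F = m \<and> (\<forall>K\<in>Ks. \<not> K \<subseteq> F)} \<le> card (Kfree_family n m r)"
    using card_mono[OF finK sub] .
  then have "2 * card {F. F \<subseteq> Pn n \<and> card F = m \<and> (\<forall>K\<in>Ks. \<not> K \<subseteq> F)} * ((card (Pn n) - m) choose L) \<le> 2 * card (Kfree_family n m r) * ((card (Pn n) - m) choose L)"
    by (intro mult_le_mono1) simp
  then show ?thesis using D unfolding card_Pn by linarith
qed




lemma binom_ratio:
  fixes A N m :: nat
  assumes "A \<le> N"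
  shows "real (A choose m) * real N ^ m \<le> real (N choose m) * real A ^ m"
proof (cases "m \<le> A")
  case False
  then show ?thesis by (simp add: binomial_eq_0)
next
  case True
  have mN: "m \<le> N" using True assms by simp
  have "real (A choose m) * real N ^ m = (\<Prod>i = 0..<m. real (A - i) / real (m - i) * real N)"
  proof -
    have "real (A choose m) = (\<Prod>i = 0..<m. real (A - i) / real (m - i))"
      using True by (rule binomial_altdef_of_nat)
    moreover have "real N ^ m = (\<Prod>i = 0..<m. real N)" by simp
    ultimately show ?thesis by (simp only: prod.distrib)
  qed
  also have "\<dots> \<le> (\<Prod>i = 0..<m. real (N - i) / real (m - i) * real A)"
  proof (rule prod_mono)
    fix i assume i: "i \<in> {0..<m}"
    have iA: "i \<le> A" "i \<le> N" using i True mN by auto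
    have "real (A - i) * real N \<le> real (N - i) * real A"
      using iA assms by (simp add: of_nat_diff algebra_simps mult_right_mono)
    then have "real (A - i) * real N / real (m - i) \<le> real (N - i) * real A / real (m - i)"
      by (simp add: divide_right_mono)
    then show "0 \<le> real (A - i) / real (m - i) * real N \<and> real (A - i) / real (m - i) * real N \<le> real (N - i) / real (m - i) * real A"
      by simp
  qed
  also have "\<dots> = real (N choose m) * real A ^ m"
  proof -
    have "real (N choose m) = (\<Prod>i = 0..<m. real (N - i) / real (m - i))"
      using mN by (rule binomial_altdef_of_nat)
    moreover have "real A ^ m = (\<Prod>i = 0..<m. real A)" by simp
    ultimately show ?thesis by (simp only: prod.distrib)
  qed
  finally show ?thesis .
qed

lemma pigeon_class:
  assumes col: "colorable n E k" and k: "k \<ge> 1"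
  shows "\<exists>C. C \<subseteq> {1..n} \<and> n \<le> k * card C \<and> (\<forall>x\<in>C. \<forall>y\<in>C. {x, y} \<notin> E)"
proof -
  obtain f where f: "\<forall>v\<in>{1..n}. f v < k" "\<forall>x y. {x, y} \<in> E \<longrightarrow> f x \<noteq> (f y :: nat)"
    using col unfolding colorable_def by blast
  define Cl where "Cl = (\<lambda>j. {v\<in>{1..n}. f v = j})"
  have cov: "{1..n} = (\<Union>j<k. Cl j)" unfolding Cl_def using f(1) by auto
  have "n \<le> (\<Sum>j<k. card (Cl j))"
  proof -
    have "n = card (\<Union>j<k. Cl j)" using cov by (metis card_atLeastAtMost diff_Suc_1)
    also have "\<dots> \<le> (\<Sum>j<k. card (Cl j))" by (rule card_UN_le) simp
    finally show ?thesis .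
  qed
  then obtain j where j: "j < k" "n \<le> k * card (Cl j)"
  proof -
    assume H: "\<And>j. j < k \<Longrightarrow> n \<le> k * card (Cl j) \<Longrightarrow> thesis"
    show thesis
    proof (rule ccontr)
      assume nt: "\<not> thesis"
      have lt: "k * card (Cl j) + 1 \<le> n" if "j < k" for j using H[OF that] nt by fastforce
      have "k * (\<Sum>j<k. card (Cl j)) = (\<Sum>j<k. k * card (Cl j))" by (simp add: sum_distrib_left)
      also have "\<dots> \<le> (\<Sum>j<k. n - 1)" by (rule sum_mono) (use lt in fastforce)
      also have "\<dots> = k * (n - 1)" by simp
      finally have "k * (\<Sum>j<k. card (Cl j)) \<le> k * (n - 1)" .
      then have "(\<Sum>j<k. card (Cl j)) \<le> n - 1" using k by simp
      moreover have "n \<ge> 1" using lt[of 0] k by simp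
      ultimately show False using \<open>n \<le> (\<Sum>j<k. card (Cl j))\<close> by linarith
    qed
  qed
  have "\<forall>x\<in>Cl j. \<forall>y\<in>Cl j. {x, y} \<notin> E" using f(2) unfolding Cl_def by fastforce
  moreover have "Cl j \<subseteq> {1..n}" unfolding Cl_def by auto
  ultimately show ?thesis using j by blast
qed




lemma real_choose2: "real (a choose 2) = real a * (real a - 1) / 2"
proof (cases a)
  case 0 then show ?thesis by simp
next
  case (Suc b)
  have "2 * (a choose 2) = a * (a - 1)" using choose_two[of a] by (simp add: Suc)
  then have "2 * real (a choose 2) = real a * (real a - 1)"
    using Suc by (metis of_nat_1 of_nat_diff of_nat_mult of_nat_numeral le_add1 plus_1_eq_Suc)
  then show ?thesis by simp
qed

lemma mono_bound:
  fixes n k a :: nat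
  assumes k: "k \<ge> 1" and n2k: "n \<ge> 2 * k" and ka: "n \<le> k * a"
  shows "real (n choose 2) \<le> 2 * real k ^ 2 * real (a choose 2)"
proof -
  have ka': "real n \<le> real k * real a" using ka of_nat_le_iff[of n "k*a", where 'a=real] by simp
  have nk: "2 * real k \<le> real n" using n2k of_nat_le_iff[of "2*k" n, where 'a=real] by simp
  have k1: "real k \<ge> 1" using k by simp
  have h1: "real n - real k \<le> real k * real a - real k" using ka' by simp
  have h2: "0 \<le> real n - real k" using nk k1 by simp
  have "real n * (real n - real k) \<le> (real k * real a) * (real k * real a - real k)"
    using mult_mono[OF ka' h1] h2 by simp
  moreover have "real n * (real n - 1) \<le> 2 * (real n * (real n - real k))"
  proof -
    have "0 \<le> real n * (real n - 2 * real k + 1)" using nk by (intro mult_nonneg_nonneg) auto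
    then show ?thesis by (simp add: algebra_simps)
  qed
  ultimately have "real n * (real n - 1) \<le> 2 * ((real k * real a) * (real k * real a - real k))"
    by linarith
  moreover have "real (n choose 2) = (real n * (real n - 1)) / 2" by (rule real_choose2)
  moreover have "2 * real k ^ 2 * real (a choose 2) = (real k * real a) * (real k * real a - real k)"
    by (simp add: real_choose2 power2_eq_square field_simps)
  ultimately show ?thesis by linarith
qed

lemma card_KS: "finite S \<Longrightarrow> card (KS S) = card S choose 2"
  unfolding KS_def by (rule n_subsets)

lemma one_sub_bound:
  fixes A N m :: nat and \<beta> :: real
  assumes AN: "A \<le> N" and N0: "N > 0" and b: "real A \<le> \<beta> * real N"
  shows "real (A choose m) \<le> real (N choose m) * \<beta> ^ m"
proof -
  have "real (A choose m) * real N ^ m \<le> real (N choose m) * real A ^ m" by (rule binom_ratio[OF AN])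
  also have "\<dots> \<le> real (N choose m) * (\<beta> * real N) ^ m"
    by (intro mult_left_mono power_mono b) auto
  also have "\<dots> = (real (N choose m) * \<beta> ^ m) * real N ^ m" by (simp add: power_mult_distrib)
  finally show ?thesis using N0 by simp
qed

lemma upperG:
  assumes k: "k \<ge> 1" and n2k: "n \<ge> 2 * k"
  shows "real (card (colorable_family n m k)) \<le> 2 ^ n * real ((n choose 2) choose m) * (1 - 1 / (2 * real k ^ 2)) ^ m"
proof -
  define N where "N = n choose 2"
  define \<beta> where "\<beta> = 1 - 1 / (2 * real k ^ 2)"
  define Cs where "Cs = {C. C \<subseteq> {1..n} \<and> n \<le> k * card C}"
  define Sub where "Sub = (\<lambda>C. {E. E \<subseteq> Pn n - KS C \<and> card E = m})"
  have finCs: "finite Cs" unfolding Cs_def by (rule finite_subset[of _ "Pow {1..n}"]) auto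
  have cCs: "card Cs \<le> 2 ^ n"
  proof -
    have "card Cs \<le> card (Pow {1..n})" unfolding Cs_def by (rule card_mono) auto
    then show ?thesis by (simp add: card_Pow)
  qed
  have N0: "N > 0" unfolding N_def using n2k k by simp
  have sub: "colorable_family n m k \<subseteq> (\<Union>C\<in>Cs. Sub C)"
  proof
    fix E assume "E \<in> colorable_family n m k"
    then have E: "E \<subseteq> Pn n" "card E = m" "colorable n E k"
      unfolding colorable_family_def graphs_on_Pn by auto
    obtain C where C: "C \<subseteq> {1..n}" "n \<le> k * card C" "\<forall>x\<in>C. \<forall>y\<in>C. {x, y} \<notin> E"
      using pigeon_class[OF E(3) k] by blast
    have "E \<subseteq> Pn n - KS C"
    proof
      fix e assume e: "e \<in> E"
      have "e \<notin> KS C"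
      proof
        assume "e \<in> KS C"
        then have "e \<subseteq> C" "card e = 2" unfolding KS_def by auto
        then obtain x y where "e = {x, y}" "x \<noteq> y" using card_2_iff[of e] by blast
        then show False using C(3) e \<open>e \<subseteq> C\<close> by auto
      qed
      then show "e \<in> Pn n - KS C" using E(1) e by auto
    qed
    then show "E \<in> (\<Union>C\<in>Cs. Sub C)" using C E unfolding Cs_def Sub_def by blast
  qed
  have finU: "finite (\<Union>C\<in>Cs. Sub C)"
    using finCs unfolding Sub_def by (auto intro: finite_subset[of _ "Pow (Pn n)"] simp: finite_Pn)
  have "card (colorable_family n m k) \<le> card (\<Union>C\<in>Cs. Sub C)" by (rule card_mono[OF finU sub])
  also have "\<dots> \<le> (\<Sum>C\<in>Cs. card (Sub C))" by (rule card_UN_le[OF finCs])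
  finally have c1: "real (card (colorable_family n m k)) \<le> (\<Sum>C\<in>Cs. real (card (Sub C)))"
    using of_nat_mono by fastforce
  have each: "real (card (Sub C)) \<le> real (N choose m) * \<beta> ^ m" if "C \<in> Cs" for C
  proof -
    have C: "C \<subseteq> {1..n}" "n \<le> k * card C" using that unfolding Cs_def by auto
    have finC: "finite C" using C(1) finite_subset by blast
    have KSP: "KS C \<subseteq> Pn n" using C(1) unfolding KS_def Pn_def by auto
    define A where "A = card (Pn n - KS C)"
    have cS: "card (Sub C) = A choose m" unfolding Sub_def A_def
      using n_subsets[of "Pn n - KS C" m] finite_Pn by simp
    have Aeq: "A = N - (card C choose 2)" unfolding A_def N_def
      using card_Diff_subset[OF finite_subset[OF KSP finite_Pn] KSP] card_Pn card_KS[OF finC] by simp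
    have le: "card C choose 2 \<le> N" unfolding N_def
      using card_mono[OF finite_Pn KSP] card_Pn card_KS[OF finC] by simp
    have AN: "A \<le> N" using Aeq by simp
    have mb: "real N \<le> 2 * real k ^ 2 * real (card C choose 2)"
      unfolding N_def by (rule mono_bound[OF k n2k C(2)])
    have k2: "2 * real k ^ 2 > 0" using k by simp
    have "real A = real N - real (card C choose 2)" using Aeq le by (simp add: of_nat_diff)
    also have "\<dots> \<le> real N - real N / (2 * real k ^ 2)"
      using mb k2 by (simp add: divide_le_eq mult.commute)
    also have "\<dots> = \<beta> * real N" unfolding \<beta>_def by (simp add: algebra_simps)
    finally have "real A \<le> \<beta> * real N" .
    then show ?thesis using cS one_sub_bound[OF AN N0] by simp
  qed
  have "(\<Sum>C\<in>Cs. real (card (Sub C))) \<le> (\<Sum>C\<in>Cs. real (N choose m) * \<beta> ^ m)"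
    by (rule sum_mono) (rule each)
  also have "\<dots> = real (card Cs) * (real (N choose m) * \<beta> ^ m)" by simp
  also have "\<dots> \<le> 2 ^ n * (real (N choose m) * \<beta> ^ m)"
  proof (rule mult_right_mono)
    show "real (card Cs) \<le> 2 ^ n" using of_nat_mono[OF cCs, where 'a=real] by simp
    have "real k ^ 2 \<ge> 1" using k by (simp add: one_le_power)
    then have "1 / (2 * real k ^ 2) \<le> 1" by (simp add: divide_le_eq)
    then have "\<beta> \<ge> 0" unfolding \<beta>_def by simp
    then show "0 \<le> real (N choose m) * \<beta> ^ m" by simp
  qed
  finally show ?thesis using c1 unfolding N_def \<beta>_def by (simp add: mult.assoc)
qed

lemma exists_colorable:
  assumes k: "k \<ge> 2" and n: "n \<ge> 2" and m: "real m \<le> real n ^ 2 / 8"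
  shows "card (colorable_family n m k) > 0"
proof -
  define h where "h = n div 2"
  define Bip where "Bip = (\<lambda>(x, y). {x, y}) ` ({1..h} \<times> {h+1..n})"
  have inj: "inj_on (\<lambda>(x, y). {x, y}) ({1..h} \<times> {h+1..n})"
  proof (rule inj_onI, clarify)
    fix a b c d assume ab: "a \<in> {1..h}" "b \<in> {h+1..n}" "c \<in> {1..h}" "d \<in> {h+1..n}" and e: "{a, b} = {c, d}"
    then show "a = c \<and> b = d" by (auto simp: doubleton_eq_iff)
  qed
  have cB: "card Bip = h * (n - h)" unfolding Bip_def using card_image[OF inj] by (simp add: card_cartesian_product)
  have "real m \<le> real (h * (n - h))"
  proof -
    have h1: "2 * real h \<ge> real n - 1" unfolding h_def by linarith
    have h2: "real (n - h) \<ge> real n / 2" unfolding h_def by linarith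
    have "real (h * (n - h)) = real h * real (n - h)" by simp
    also have "\<dots> \<ge> ((real n - 1) / 2) * (real n / 2)"
      using h1 h2 n by (intro mult_mono) auto
    finally have "real (h * (n - h)) \<ge> ((real n - 1) / 2) * (real n / 2)" .
    moreover have "((real n - 1) / 2) * (real n / 2) \<ge> real n ^ 2 / 8"
    proof -
      have "real n * (real n - 2) \<ge> 0" using n by simp
      then show ?thesis by (simp add: power2_eq_square algebra_simps)
    qed
    ultimately show ?thesis using m by linarith
  qed
  then have "m \<le> card Bip" using cB by linarith
  then obtain E where E: "E \<subseteq> Bip" "card E = m" by (meson obtain_subset_with_card_n)
  have BP: "Bip \<subseteq> Pn n" unfolding Bip_def Pn_def h_def by auto
  have col: "colorable n E k" unfolding colorable_def
  proof (intro exI[of _ "\<lambda>v. if v \<le> h then 0 else 1"] conjI allI impI ballI)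
    fix v show "(if v \<le> h then 0 else 1) < k" using k by simp
  next
    fix x y assume "{x, y} \<in> E"
    then have "{x, y} \<in> Bip" using E(1) by blast
    then obtain a b where ab: "a \<le> h" "b \<ge> h + 1" "{x, y} = {a, b}" unfolding Bip_def by auto
    then show "(if x \<le> h then 0 else 1) \<noteq> (if y \<le> h then 0 else 1 :: nat)"
      by (auto simp: doubleton_eq_iff)
  qed
  have "E \<in> colorable_family n m k" unfolding colorable_family_def graphs_on_Pn using E BP col by auto
  moreover have "finite (colorable_family n m k)"
    by (rule finite_subset[of _ "Pow (Pn n)"]) (auto simp: colorable_family_def graphs_on_Pn finite_Pn)
  ultimately show ?thesis using card_gt_0_iff by blast
qed




lemma pow_fact_exp: "real L ^ L / fact L \<le> exp (real L)"
proof -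
  have s: "(\<lambda>j. real L ^ j / fact j) sums exp (real L)"
    using exp_converges[of "real L"] by (simp add: divide_inverse_commute scaleR_conv_of_real)
  have "(\<Sum>j\<in>{L}. real L ^ j / fact j) \<le> (\<Sum>j. real L ^ j / fact j)"
    by (rule sum_le_suminf) (use s sums_summable in auto)
  then show ?thesis using sums_unique[OF s] by simp
qed

lemma binom_exp_bound:
  fixes m L :: nat and B :: real
  assumes L: "L \<ge> 1" and B: "real (m + L) \<le> B * real L"
  shows "real ((m + L) choose L) \<le> (exp 1 * B) ^ L"
proof -
  have Lp: "real L > 0" using L by simp
  have f: "fact L > (0::real)" by simp
  have "real ((m + L) choose L) * fact L \<le> real (m + L) ^ L"
    using binomial_fact_pow[of "m + L" L] by (metis of_nat_fact of_nat_le_iff of_nat_mult of_nat_power)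
  then have b1: "real ((m + L) choose L) \<le> real (m + L) ^ L / fact L" using f by (simp add: field_simps)
  also have "\<dots> \<le> (B * real L) ^ L / fact L"
    by (intro divide_right_mono power_mono B) auto
  also have "\<dots> = B ^ L * (real L ^ L / fact L)" by (simp add: power_mult_distrib)
  also have "\<dots> \<le> B ^ L * exp (real L)"
  proof (rule mult_left_mono[OF pow_fact_exp])
    have "0 \<le> B * real L" using B by (smt (verit) of_nat_0_le_iff)
    then have "B \<ge> 0" using Lp by (simp add: zero_le_mult_iff)
    then show "0 \<le> B ^ L" by simp
  qed
  also have "\<dots> = (exp 1 * B) ^ L" by (simp add: power_mult_distrib exp_of_nat_mult[symmetric] mult.commute)
  finally show ?thesis .
qed




lemma alpha_identity:
  fixes r s :: nat
  assumes sdef: "s = (r + 1) choose 2" and r: "r \<ge> 2"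
  shows "real (s - 1) * (2 - 2 / (real r + 2)) = real (2 * s - r - 1)" and "s \<ge> 3" and "2 * s \<ge> r + 1"
proof -
  have rs: "real s = (real r + 1) * real r / 2" using real_choose2[of "r+1"] sdef by simp
  have "2 * real s \<ge> 3 * 2"
  proof -
    have "(real r + 1) * real r \<ge> 3 * 2" using r mult_mono[of 3 "real r + 1" 2 "real r"] by simp
    then show ?thesis using rs by simp
  qed
  then show s3: "s \<ge> 3" by simp
  have "2 * real s \<ge> real r + 1"
  proof -
    have "(real r + 1) * real r \<ge> (real r + 1)" using r mult_left_mono[of 1 "real r" "real r + 1"] by simp
    then show ?thesis using rs by linarith
  qed
  then show s2: "2 * s \<ge> r + 1" by linarith
  have "real (2 * s - r - 1) = 2 * real s - real r - 1" using s2 by (simp add: of_nat_diff)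
  moreover have "real (s - 1) = real s - 1" using s3 by (simp add: of_nat_diff)
  moreover have "(real s - 1) * (2 - 2 / (real r + 2)) = 2 * real s - real r - 1"
    unfolding rs by (simp add: field_simps)
  ultimately show "real (s - 1) * (2 - 2 / (real r + 2)) = real (2 * s - r - 1)" by simp
qed

lemma pow_bound:
  fixes r s n :: nat and m d :: real
  assumes sdef: "s = (r + 1) choose 2" and r: "r \<ge> 2" and n: "n \<ge> 1" and m0: "0 \<le> m" and d0: "0 \<le> d"
    and md: "m \<le> d * real n powr (2 - 2 / (real r + 2))"
  shows "m ^ (s - 1) \<le> d ^ (s - 1) * real n ^ (2 * s - r - 1)"
proof -
  have "m ^ (s - 1) \<le> (d * real n powr (2 - 2 / (real r + 2))) ^ (s - 1)"
    by (rule power_mono[OF md m0])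
  also have "\<dots> = d ^ (s - 1) * (real n powr (2 - 2 / (real r + 2))) ^ (s - 1)"
    by (simp add: power_mult_distrib)
  also have "(real n powr (2 - 2 / (real r + 2))) ^ (s - 1) = real n powr (real (s - 1) * (2 - 2 / (real r + 2)))"
    using n by (subst powr_power) auto
  also have "\<dots> = real n ^ (2 * s - r - 1)"
    using alpha_identity(1)[OF sdef r] n by (simp add: powr_realpow)
  finally show ?thesis .
qed

lemma markov_real:
  fixes n m m' N q s r :: nat and d :: real
  assumes n: "n \<ge> 2" and N: "N = n choose 2" and mm': "m' \<le> 2 * m" and q: "q \<ge> 1" and s2: "s \<ge> 2"
    and srn: "2 * s \<ge> r + 1"
    and d: "d = 1 / (2 * real q * 8 ^ s)" and mb: "real m ^ (s - 1) \<le> d ^ (s - 1) * real n ^ (2 * s - r - 1)"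
  shows "2 * real n ^ (r + 1) * (real m' / real N) ^ s \<le> real m / real q"
proof -
  have np: "real n > 0" using n by simp
  have N4: "real N \<ge> real n ^ 2 / 4"
  proof -
    have "real N = real n * (real n - 1) / 2" unfolding N by (rule real_choose2)
    moreover have "real n * (real n - 2) \<ge> 0" using n by simp
    ultimately show ?thesis by (simp add: power2_eq_square algebra_simps)
  qed
  have Np: "real N > 0" using N4 np by (smt (verit) zero_less_power divide_pos_pos)
  have r1: "real m' / real N \<le> 8 * real m / real n ^ 2"
  proof -
    have "real m' / real N \<le> (2 * real m) / (real n ^ 2 / 4)"
      using mm' N4 np by (intro frac_le) auto
    then show ?thesis by simp
  qed
  have "(real m' / real N) ^ s \<le> (8 * real m / real n ^ 2) ^ s"
    by (rule power_mono[OF r1]) (use Np in simp)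
  also have "\<dots> = 8 ^ s * real m ^ s / real n ^ (2 * s)"
    by (simp add: power_mult_distrib power_divide power_mult)
  finally have p1: "(real m' / real N) ^ s \<le> 8 ^ s * real m ^ s / real n ^ (2 * s)" .
  have "(1::real) \<le> 8 ^ s" by (simp add: one_le_power)
  then have "(1::real) \<le> 2 * 8 ^ s" by linarith
  then have "1 * 1 \<le> real q * (2 * 8 ^ s)" using q by (intro mult_mono) auto
  then have d1: "d \<le> 1" "d \<ge> 0" unfolding d by (auto simp: field_simps)
  have "d ^ (s - 1) \<le> d ^ 1" by (rule power_decreasing) (use s2 d1 in auto)
  then have "d ^ (s - 1) * real n ^ (2 * s - r - 1) \<le> d * real n ^ (2 * s - r - 1)"
    by (intro mult_right_mono) auto
  with mb have mb2: "real m ^ (s - 1) \<le> d * real n ^ (2 * s - r - 1)" by linarith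
  have "real m ^ s = real m * real m ^ (s - 1)" using s2 by (metis Suc_diff_le diff_Suc_1 le_trans one_le_numeral power_Suc)
  also have "\<dots> \<le> real m * (d * real n ^ (2 * s - r - 1))" by (rule mult_left_mono[OF mb2]) simp
  finally have ms: "real m ^ s \<le> real m * d * real n ^ (2 * s - r - 1)" by simp
  have "2 * real n ^ (r + 1) * (real m' / real N) ^ s \<le> 2 * real n ^ (r + 1) * (8 ^ s * real m ^ s / real n ^ (2 * s))"
    by (rule mult_left_mono[OF p1]) simp
  also have "\<dots> \<le> 2 * real n ^ (r + 1) * (8 ^ s * (real m * d * real n ^ (2 * s - r - 1)) / real n ^ (2 * s))"
    by (intro mult_left_mono divide_right_mono ms) auto
  also have "\<dots> = 2 * 8 ^ s * d * real m * (real n ^ (r + 1) * real n ^ (2 * s - r - 1) / real n ^ (2 * s))"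
    by (simp add: algebra_simps)
  also have "real n ^ (r + 1) * real n ^ (2 * s - r - 1) = real n ^ (2 * s)"
  proof -
    have "r + 1 + (2 * s - r - 1) = 2 * s" using srn by simp
    then show ?thesis by (metis power_add)
  qed
  also have "2 * 8 ^ s * d * real m * (real n ^ (2 * s) / real n ^ (2 * s)) = real m / real q"
    using np q unfolding d by (simp add: field_simps)
  finally show ?thesis .
qed

lemma final_est:
  fixes k q m n L :: nat
  assumes k: "k \<ge> 2" and q: "q = 576 * k ^ 4" and L: "L \<ge> 1" and Lq: "real L * real q \<le> real m"
    and mL: "real (m + L) \<le> 3 * real q * real L" and cm: "12 * real k ^ 2 * real n \<le> real m"
  shows "2 * real n * real ((m + L) choose L) * 2 ^ n * (1 - 1 / (2 * real k ^ 2)) ^ m \<le> 1"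
proof -
  define K where "K = real k ^ 2"
  have K: "K \<ge> 4" unfolding K_def using k power_mono[of 2 "real k" 2] by simp
  have qK: "real q = 576 * K ^ 2" unfolding q K_def by (simp add: power_mult[symmetric])
  have qp: "real q > 0" using qK K by simp
  have "real ((m + L) choose L) \<le> (exp 1 * (3 * real q)) ^ L"
    by (rule binom_exp_bound[OF L]) (use mL in simp)
  also have "\<dots> \<le> (9 * real q) ^ L"
    by (rule power_mono) (use exp_le qp in auto)
  also have "\<dots> = exp (real L * ln (9 * real q))" using qp by (simp add: exp_of_nat_mult)
  also have "\<dots> \<le> exp (real m / (4 * K))"
  proof -
    have "9 * real q = (72 * K) ^ 2" unfolding qK by (simp add: power2_eq_square)
    then have "ln (9 * real q) = 2 * ln (72 * K)" using ln_realpow[of "72 * K" 2] by simp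
    also have "\<dots> \<le> 2 * (72 * K)"
    proof -
      have "72 * K > 0" using K by simp
      then have "ln (72 * K) < 72 * K" by (rule ln_less_self)
      then show ?thesis by simp
    qed
    finally have l: "ln (9 * real q) \<le> 144 * K" by simp
    have l0: "ln (9 * real q) \<ge> 0" using qp by (simp add: Suc_le_eq)
    have "real L * ln (9 * real q) \<le> (real m / real q) * (144 * K)"
    proof (rule mult_mono)
      show "real L \<le> real m / real q" using Lq qp by (simp add: field_simps)
    qed (use l l0 in auto)
    also have "\<dots> = real m / (4 * K)" unfolding qK using K by (simp add: field_simps power2_eq_square)
    finally show ?thesis by simp
  qed
  finally have B: "real ((m + L) choose L) \<le> exp (real m / (4 * K))" .
  have b0: "0 \<le> 1 - 1 / (2 * K)" using K by (simp add: field_simps)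
  have bm: "0 \<le> (1 - 1 / (2 * K)) ^ m" using b0 by (rule zero_le_power)
  have "1 - 1 / (2 * K) \<le> exp (- (1 / (2 * K)))" using exp_ge_add_one_self[of "- (1 / (2 * K))"] by simp
  then have "(1 - 1 / (2 * K)) ^ m \<le> exp (- (1 / (2 * K))) ^ m" by (rule power_mono[OF _ b0])
  also have "\<dots> = exp (- (real m / (2 * K)))" by (simp add: exp_of_nat_mult[symmetric])
  finally have be: "(1 - 1 / (2 * K)) ^ m \<le> exp (- (real m / (2 * K)))" .
  have "(2::real) ^ n \<le> exp 1 ^ n"
    by (rule power_mono) (use exp_ge_add_one_self[of 1] in auto)
  then have tw: "(2::real) ^ n \<le> exp (real n)" by (simp add: exp_of_nat_mult[symmetric])
  have "2 * real n * real ((m + L) choose L) * 2 ^ n * (1 - 1 / (2 * K)) ^ m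
      \<le> 2 * real n * exp (real m / (4 * K)) * exp (real n) * exp (- (real m / (2 * K)))"
    using bm by (intro mult_mono B tw be) auto
  also have "\<dots> = 2 * real n * exp (real n - real m / (4 * K))"
    by (simp add: exp_add[symmetric] exp_diff field_simps) 
  also have "\<dots> \<le> 2 * real n * exp (- (2 * real n))"
  proof -
    have "real m / (4 * K) \<ge> 3 * real n" using cm K unfolding K_def[symmetric] by (simp add: pos_le_divide_eq algebra_simps)
    then show ?thesis by (intro mult_left_mono) auto
  qed
  also have "\<dots> \<le> 1"
  proof -
    have "1 + 2 * real n \<le> exp (2 * real n)" by (rule exp_ge_add_one_self)
    then have "2 * real n \<le> exp (2 * real n)" by linarith
    then show ?thesis by (simp add: exp_minus field_simps)
  qed
  finally show ?thesis unfolding K_def .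
qed




lemma key:
  fixes r k n m s q :: nat and d :: real
  assumes r: "r \<ge> 2" and k: "k \<ge> 2" and sdef: "s = (r + 1) choose 2" and qdef: "q = 576 * k ^ 4"
    and ddef: "d = 1 / (2 * real q * 8 ^ s)" and nq: "n \<ge> q" and ns: "n \<ge> s"
    and cm: "12 * real k ^ 2 * real n \<le> real m"
    and md: "real m \<le> d * real n powr (2 - 2 / (real r + 2))"
  shows "real n \<le> real (card (Kfree_family n m r)) / real (card (colorable_family n m k))"
proof -
  define N where "N = n choose 2"
  define L where "L = m div q"
  define \<beta> where "\<beta> = 1 - 1 / (2 * real k ^ 2)"
  have s3: "s \<ge> 3" and srn: "2 * s \<ge> r + 1" using alpha_identity[OF sdef r] by auto
  have k4: "k ^ 4 \<ge> k" using k by (simp add: self_le_power)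
  have q1: "q \<ge> 2 * k" using k4 qdef by simp
  have qp: "q \<ge> 1" using q1 k by simp
  have n2: "n \<ge> 2" using nq q1 k by simp
  have n2k: "n \<ge> 2 * k" using nq q1 by simp
  have "real k ^ 2 \<ge> 1" using k by (simp add: one_le_power)
  then have "12 * real k ^ 2 * real n \<ge> 1 * real n" by (intro mult_right_mono) auto
  then have mn: "m \<ge> n" using cm by linarith
  have mq: "m \<ge> q" using mn nq by simp
  have L1: "L \<ge> 1" unfolding L_def using mq qp by (simp add: div_greater_zero_iff Suc_le_eq)
  have Lqm: "L * q \<le> m" unfolding L_def by simp
  have mLq: "m < (L + 1) * q"
  proof -
    have "m mod q < q" using qp by simp
    moreover have "m div q * q + m mod q = m" by (rule div_mult_mod_eq)
    moreover have "(m div q + 1) * q = m div q * q + q" by (simp add: algebra_simps)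
    ultimately show ?thesis unfolding L_def by linarith
  qed
  have m3: "m + L \<le> 3 * q * L"
  proof -
    have a: "q \<le> q * L" using L1 by simp
    have b: "L \<le> q * L" using qp by simp
    have c: "m < q + q * L" using mLq by (simp add: algebra_simps)
    from a b c have "m + L \<le> 3 * (q * L)" by linarith
    then show ?thesis by (simp add: mult.assoc)
  qed
  have Lm: "L \<le> m" proof -
    have "L \<le> L * q" using qp by simp
    then show ?thesis using Lqm by linarith
  qed
  have np: "real n \<ge> 1" using n2 by simp
  have pw: "real n powr (2 - 2 / (real r + 2)) \<le> real n ^ 2"
  proof -
    have "real n powr (2 - 2 / (real r + 2)) \<le> real n powr 2"
      by (rule powr_mono) (use np in auto)
    moreover have "real n powr 2 = real n ^ 2" by (rule powr_numeral) simp
    ultimately show ?thesis by simp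
  qed
  have "(8::real) ^ s \<ge> 8" using s3 power_increasing[of 1 s "8::real"] by simp
  then have "2 * real q * 8 ^ s \<ge> 16" using qp mult_mono[of 2 "2 * real q" 8 "8 ^ s"] by simp
  then have d16: "d \<le> 1 / 16" and d0: "d \<ge> 0" unfolding ddef by (auto simp: field_simps)
  have mn2: "real m \<le> real n ^ 2 / 16"
  proof -
    have "real m \<le> d * real n ^ 2" using md pw d0 by (meson mult_left_mono order_trans)
    also have "\<dots> \<le> (1/16) * real n ^ 2" using d16 by (intro mult_right_mono) auto
    also have "\<dots> = real n ^ 2 / 16" by simp
    finally show ?thesis .
  qed
  have N4: "real N \<ge> real n ^ 2 / 4"
  proof -
    have "real N = real n * (real n - 1) / 2" unfolding N_def by (rule real_choose2)
    moreover have "real n * (real n - 2) \<ge> 0" using n2 by simp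
    ultimately show ?thesis by (simp add: power2_eq_square algebra_simps)
  qed
  have mLN: "m + L \<le> N"
  proof -
    have "real (m + L) \<le> 2 * real m" using Lm by simp
    then have "real (m + L) \<le> real N" using mn2 N4 by linarith
    then show ?thesis by simp
  qed
  have smL: "s \<le> m + L" using ns mn by simp
  define m' where "m' = m + L"
  define X where "X = (N - s) choose (m' - s)"
  have sm': "s \<le> m'" and m'N: "m' \<le> N" using smL mLN unfolding m'_def by auto
  have cm1: "(N choose m') * (m' choose s) = (N choose s) * X" unfolding X_def by (rule choose_mult[OF sm' m'N])
  have br: "real (m' choose s) * real N ^ s \<le> real (N choose s) * real m' ^ s" by (rule binom_ratio[OF m'N])
  have Ns: "real (N choose s) > 0" using sm' m'N by simp
  have Np: "real N > 0" proof -
    have "real n ^ 2 / 4 > 0" using n2 by simp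
    then show ?thesis using N4 by linarith
  qed
  have Xb: "real X \<le> real (N choose m') * (real m' / real N) ^ s"
  proof -
    have "real X * real (N choose s) * real N ^ s = real (N choose m') * (real (m' choose s) * real N ^ s)"
      using arg_cong[OF cm1, of real] by (simp add: algebra_simps)
    also have "\<dots> \<le> real (N choose m') * (real (N choose s) * real m' ^ s)" by (rule mult_left_mono[OF br]) simp
    finally have "real X * real N ^ s * real (N choose s) \<le> (real (N choose m') * real m' ^ s) * real (N choose s)"
      by (simp add: algebra_simps)
    then have "real X * real N ^ s \<le> real (N choose m') * real m' ^ s" using Ns by simp
    then show ?thesis using Np by (simp add: power_divide field_simps)
  qed
  have cn: "real (n choose (r + 1)) \<le> real n ^ (r + 1)"
  proof (cases "r + 1 \<le> n")
    case True then show ?thesis using of_nat_mono[OF binomial_le_pow[OF True], where 'a=real] by simp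
  next
    case False then show ?thesis by (simp add: binomial_eq_0)
  qed
  have mb: "real m ^ (s - 1) \<le> d ^ (s - 1) * real n ^ (2 * s - r - 1)"
    by (rule pow_bound[OF sdef r _ _ d0 md]) (use n2 in auto)
  have mr: "2 * real n ^ (r + 1) * (real m' / real N) ^ s \<le> real m / real q"
    by (rule markov_real[OF n2 N_def _ qp _ srn ddef mb]) (use s3 Lm m'_def in auto)
  have mq2: "real m / real q \<le> real (L + 1)"
  proof -
    have "real m \<le> real (L + 1) * real q" using of_nat_mono[OF less_imp_le[OF mLq], where 'a=real] by (simp add: algebra_simps)
    then show ?thesis using qp by (simp add: divide_le_eq)
  qed
  have markov: "2 * (n choose (r + 1)) * (((n choose 2) - s) choose (m + L - s)) \<le> (L + 1) * ((n choose 2) choose (m + L))"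
  proof -
    have "real (2 * (n choose (r + 1)) * X) = 2 * real (n choose (r + 1)) * real X" by simp
    also have "\<dots> \<le> 2 * real n ^ (r + 1) * (real (N choose m') * (real m' / real N) ^ s)"
      by (intro mult_mono Xb cn) auto
    also have "\<dots> = (2 * real n ^ (r + 1) * (real m' / real N) ^ s) * real (N choose m')" by simp
    also have "\<dots> \<le> real (L + 1) * real (N choose m')"
      by (rule mult_right_mono) (use mr mq2 in auto)
    also have "\<dots> = real ((L + 1) * (N choose m'))" by (simp only: of_nat_mult)
    finally have "real (2 * (n choose (r + 1)) * X) \<le> real ((L + 1) * (N choose m'))" .
    then show ?thesis unfolding X_def m'_def N_def by (simp only: of_nat_le_iff)
  qed
  have lF: "N choose m' \<le> 2 * card (Kfree_family n m r) * ((N - m) choose L)"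
    using lowerF[OF _ sdef smL _ markov] r mLN unfolding N_def m'_def by simp
  define Y where "Y = (N - m) choose L"
  have Yp: "Y > 0" unfolding Y_def using mLN by simp
  have mm': "m \<le> m'" unfolding m'_def by simp
  have cm2: "(N choose m') * (m' choose m) = (N choose m) * Y"
    unfolding Y_def using choose_mult[OF mm' m'N] unfolding m'_def by simp
  have "(N choose m) * Y \<le> 2 * card (Kfree_family n m r) * (m' choose m) * Y"
    using cm2 lF mult_le_mono1[OF lF, of "m' choose m"] by (simp add: algebra_simps Y_def)
  then have lK: "N choose m \<le> 2 * card (Kfree_family n m r) * ((m + L) choose L)"
    using Yp binomial_symmetric[OF mm'] unfolding m'_def by simp
  have uG: "real (card (colorable_family n m k)) \<le> 2 ^ n * real (N choose m) * \<beta> ^ m"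
    unfolding N_def \<beta>_def by (rule upperG) (use k n2k in auto)
  have Gp: "real (card (colorable_family n m k)) > 0"
    using exists_colorable[OF k n2] mn2 by (simp add: power2_eq_square)
  have r1: "real L * real q \<le> real m" using of_nat_mono[OF Lqm, where 'a=real] by simp
  have r2: "real (m + L) \<le> 3 * real q * real L" using of_nat_mono[OF m3, where 'a=real] by simp
  have fe: "2 * real n * real ((m + L) choose L) * 2 ^ n * \<beta> ^ m \<le> 1"
    unfolding \<beta>_def
    by (rule final_est[OF k qdef L1 r1 r2 cm])
  have b0: "\<beta> ^ m \<ge> 0"
  proof -
    have "real k ^ 2 \<ge> 1" using k by (simp add: one_le_power)
    then have "\<beta> \<ge> 0" unfolding \<beta>_def by (simp add: divide_le_eq)
    then show ?thesis by simp
  qed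
  have "real n * real (card (colorable_family n m k)) \<le> real n * (2 ^ n * real (N choose m) * \<beta> ^ m)"
    by (rule mult_left_mono[OF uG]) simp
  also have "\<dots> \<le> real n * (2 ^ n * (2 * real (card (Kfree_family n m r)) * real ((m + L) choose L)) * \<beta> ^ m)"
  proof -
    have "real (N choose m) \<le> 2 * real (card (Kfree_family n m r)) * real ((m + L) choose L)"
      using of_nat_mono[OF lK, where 'a=real] by simp
    then show ?thesis using b0 by (intro mult_left_mono mult_right_mono) auto
  qed
  also have "\<dots> = real (card (Kfree_family n m r)) * (2 * real n * real ((m + L) choose L) * 2 ^ n * \<beta> ^ m)"
    by (simp add: algebra_simps)
  also have "\<dots> \<le> real (card (Kfree_family n m r)) * 1" by (rule mult_left_mono[OF fe]) simp
  finally show ?thesis using Gp by (simp add: pos_le_divide_eq)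
qed




theorem lemma5p1:
  fixes r k :: nat
  assumes "r \<ge> 2" and "k \<ge> 2"
  shows "\<exists>c d :: real. c > 0 \<and> d > 0 \<and>
    (\<forall>m :: nat \<Rightarrow> nat.
      (\<forall>\<^sub>F n in sequentially. c * real n \<le> real (m n) \<and>
           real (m n) \<le> d * real n powr (2 - 2 / (real r + 2))) \<longrightarrow>
      filterlim (\<lambda>n. real (card (Kfree_family n (m n) r)) /
                     real (card (colorable_family n (m n) k))) at_top sequentially)"
proof -
  define s where "s = (r + 1) choose 2"
  define q where "q = 576 * k ^ 4"
  define d where "d = 1 / (2 * real q * 8 ^ s)"
  define c where "c = 12 * real k ^ 2"
  have c0: "c > 0" unfolding c_def using assms by simp
  have "q > 0" unfolding q_def using assms by simp
  then have d0: "d > 0" unfolding d_def by simp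
  have main: "\<forall>m :: nat \<Rightarrow> nat.
      (\<forall>\<^sub>F n in sequentially. c * real n \<le> real (m n) \<and>
           real (m n) \<le> d * real n powr (2 - 2 / (real r + 2))) \<longrightarrow>
      filterlim (\<lambda>n. real (card (Kfree_family n (m n) r)) /
                     real (card (colorable_family n (m n) k))) at_top sequentially"
  proof (intro allI impI)
    fix m :: "nat \<Rightarrow> nat"
    assume ev: "\<forall>\<^sub>F n in sequentially. c * real n \<le> real (m n) \<and>
           real (m n) \<le> d * real n powr (2 - 2 / (real r + 2))"
    have ev2: "\<forall>\<^sub>F n in sequentially. real n \<le> real (card (Kfree_family n (m n) r)) /
                     real (card (colorable_family n (m n) k))"
      using ev eventually_ge_at_top[of "max q s"]
    proof eventually_elim
      case (elim n)
      show ?case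
        by (rule key[OF assms s_def q_def d_def]) (use elim in \<open>auto simp: c_def\<close>)
    qed
    show "filterlim (\<lambda>n. real (card (Kfree_family n (m n) r)) /
                     real (card (colorable_family n (m n) k))) at_top sequentially"
      by (rule filterlim_at_top_mono[OF filterlim_real_sequentially ev2])
  qed
  show ?thesis using main c0 d0 by blast
qed


end
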